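(* Let $\lambda_1,\lambda_2$ be as in the context and, for each $c>0$, let $\widetilde{\theta_c}$ be the unique $\theta\in(0,\frac{\pi}{2})\cap(0,\theta_c^+)$ with $H(c,\theta)=0$. Then $\lim_{c\to+\infty}\widetilde{\theta_c}=\frac{\pi}{2}$.
   Context: Either $\lambda_1>\lambda_2>0$ or $\lambda_1=\lambda_2=1$. For $c>0$ put $\theta_c^+=\pi$ if $c>\sqrt2\lambda_1$ and $\theta_c^+=\arccos(1-c^2/\lambda_1^2)$ if $0<c\le\sqrt2\lambda_1$; $\Omega=\{(c,\theta): c>0,\ |\theta|<\theta_c^+\}$. For $(c,\theta)\in\Omega$: $D=\sin\theta/c$; $\varphi$ is the global solution of $\varphi'(u)=\sqrt{c^2+2\cos\theta\,B(u)-D^2B(u)^2}$, $\varphi(0)=0$, where $B(u)=\lambda_1^2\cos^2\varphi(u)+\lambda_2^2\sin^2\varphi(u)$; $U>0$ is the unique number with $\varphi(U)=\pi$; $f$ solves $f'(u)=DB(u)$, $f(0)=0$; $G(u)=\int_0^u\frac{c-\varphi'(s)}{B(s)}ds$; $H(c,\theta)=Df(U)+cG(U)$. For every $c>0$ there is exactly one $\theta\in(0,\pi/2)\cap(0,\theta_c^+)$ with $H(c,\theta)=0$. *)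

theory Defs
  imports "HOL-Analysis.Analysis"
begin

definition theta_plus :: "real \<Rightarrow> real \<Rightarrow> real" where
  "theta_plus l1 c = (if c > sqrt 2 * l1 then pi else arccos (1 - c\<^sup>2 / l1\<^sup>2))"

definition Bfun :: "real \<Rightarrow> real \<Rightarrow> real \<Rightarrow> real" where
  "Bfun l1 l2 x = l1\<^sup>2 * (cos x)\<^sup>2 + l2\<^sup>2 * (sin x)\<^sup>2"

definition Dfun :: "real \<Rightarrow> real \<Rightarrow> real" where
  "Dfun c \<theta> = sin \<theta> / c"

definition rhs :: "real \<Rightarrow> real \<Rightarrow> real \<Rightarrow> real \<Rightarrow> real \<Rightarrow> real" where
  "rhs l1 l2 c \<theta> x = sqrt (c\<^sup>2 + 2 * cos \<theta> * Bfun l1 l2 x - (Dfun c \<theta>)\<^sup>2 * (Bfun l1 l2 x)\<^sup>2)"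

definition phi :: "real \<Rightarrow> real \<Rightarrow> real \<Rightarrow> real \<Rightarrow> real \<Rightarrow> real" where
  "phi l1 l2 c \<theta> = (THE \<phi>. \<phi> 0 = 0 \<and>
      (\<forall>u. (\<phi> has_real_derivative rhs l1 l2 c \<theta> (\<phi> u)) (at u)))"

definition Ufun :: "real \<Rightarrow> real \<Rightarrow> real \<Rightarrow> real \<Rightarrow> real" where
  "Ufun l1 l2 c \<theta> = (THE U. U > 0 \<and> phi l1 l2 c \<theta> U = pi)"

definition ffun :: "real \<Rightarrow> real \<Rightarrow> real \<Rightarrow> real \<Rightarrow> real \<Rightarrow> real" where
  "ffun l1 l2 c \<theta> u = integral {0..u} (\<lambda>s. Dfun c \<theta> * Bfun l1 l2 (phi l1 l2 c \<theta> s))"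

definition Gfun :: "real \<Rightarrow> real \<Rightarrow> real \<Rightarrow> real \<Rightarrow> real \<Rightarrow> real" where
  "Gfun l1 l2 c \<theta> u = integral {0..u} (\<lambda>s.
      (c - rhs l1 l2 c \<theta> (phi l1 l2 c \<theta> s)) / Bfun l1 l2 (phi l1 l2 c \<theta> s))"

definition Hfun :: "real \<Rightarrow> real \<Rightarrow> real \<Rightarrow> real \<Rightarrow> real" where
  "Hfun l1 l2 c \<theta> = Dfun c \<theta> * ffun l1 l2 c \<theta> (Ufun l1 l2 c \<theta>)
      + c * Gfun l1 l2 c \<theta> (Ufun l1 l2 c \<theta>)"

end

theory Submission
  imports Defs
begin

lemma antideriv_UNIV:
  fixes g :: "real \<Rightarrow> real"
  assumes cg: "continuous_on UNIV g"
  defines "T \<equiv> \<lambda>x. integral {0..x} g - integral {x..0} g"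
  shows "(T has_real_derivative g t) (at t)"
proof -
  define a where "a = min t 0 - 1"
  define b where "b = max t 0 + 1"
  have d: "((\<lambda>x. integral {a..x} g) has_real_derivative g t) (at t within {a..b})"
    by (rule integral_has_real_derivative) (use cg a_def b_def in \<open>auto intro: continuous_on_subset\<close>)
  have "t \<in> interior {a..b}" using a_def b_def by auto
  then have d2: "((\<lambda>x. integral {a..x} g - integral {a..0} g) has_real_derivative g t) (at t)"
  proof -
    have "((\<lambda>x. integral {a..x} g) has_real_derivative g t) (at t)"
      using d at_within_interior[OF \<open>t \<in> interior {a..b}\<close>] by simp
    from DERIV_diff[OF this DERIV_const] show ?thesis by simp
  qed
  show ?thesis
  proof (rule has_field_derivative_transform_within_open[OF d2, of "{a<..}"])
    fix x assume x: "x \<in> {a<..}"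
    have int: "g integrable_on {a..max x 0}"
      by (rule integrable_continuous_real) (use cg in \<open>auto intro: continuous_on_subset\<close>)
    show "integral {a..x} g - integral {a..0} g = T x"
    proof (cases "x \<ge> 0")
      case True
      have "integral {a..0} g + integral {0..x} g = integral {a..x} g"
        using Henstock_Kurzweil_Integration.integral_combine[of a 0 x g] int True x a_def by auto
      moreover have "integral {x..0} g = 0" using True
        by (cases "x = 0") auto
      ultimately show ?thesis unfolding T_def by simp
    next
      case False
      have "integral {a..x} g + integral {x..0} g = integral {a..0} g"
        using Henstock_Kurzweil_Integration.integral_combine[of a x 0 g] int False x a_def by auto
      moreover have "integral {0..x} g = 0" using False by auto
      ultimately show ?thesis unfolding T_def by simp
    qed
  qed (use a_def in auto)
qed

lemma ode_facts:
  fixes F :: "real \<Rightarrow> real" and M :: real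
  assumes cF: "continuous_on UNIV F" and pos: "\<And>x. F x > 0" and bnd: "\<And>x. F x \<le> M"
  obtains T where "T 0 = 0" "strict_mono T" "surj T"
     "\<exists>!\<psi>. \<psi> 0 = 0 \<and> (\<forall>u. (\<psi> has_real_derivative F (\<psi> u)) (at u))"
     "\<And>\<psi> u. \<psi> 0 = 0 \<Longrightarrow> (\<forall>u. (\<psi> has_real_derivative F (\<psi> u)) (at u)) \<Longrightarrow> T (\<psi> u) = u"
proof -
  define g where "g = (\<lambda>x. inverse (F x))"
  have cg: "continuous_on UNIV g" unfolding g_def
    using cF pos by (auto intro!: continuous_on_inverse simp: less_imp_neq[symmetric])
  define T where "T = (\<lambda>x. integral {0..x} g - integral {x..0} g)"
  have dT: "\<And>t. (T has_real_derivative g t) (at t)"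
    unfolding T_def by (rule antideriv_UNIV[OF cg])
  have gpos: "\<And>x. g x > 0" unfolding g_def using pos by simp
  have Mpos: "M > 0" using pos[of 0] bnd[of 0] by linarith
  have glow: "\<And>x. g x \<ge> inverse M" unfolding g_def using pos bnd Mpos
    by (simp add: le_imp_inverse_le)
  have T0: "T 0 = 0" unfolding T_def by simp
  have cT: "\<And>x. isCont T x" using dT DERIV_isCont by blast
  have smT: "strict_mono T"
    by (rule strict_monoI, rule DERIV_pos_imp_increasing) (use dT gpos in auto)
  have Tpos: "T x \<ge> x / M" if "x > 0" for x
  proof -
    have "\<exists>z. 0 < z \<and> z < x \<and> T x - T 0 = (x - 0) * g z"
      by (rule MVT2) (use that dT in auto)
    then obtain z where "T x - T 0 = (x - 0) * g z" by blast
    then have "T x = x * g z" using T0 by simp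
    moreover have "x * g z \<ge> x * inverse M" using glow that by (simp add: mult_left_mono)
    ultimately show ?thesis by (simp add: divide_inverse)
  qed
  have Tneg: "T x \<le> x / M" if "x < 0" for x
  proof -
    have "\<exists>z. x < z \<and> z < 0 \<and> T 0 - T x = (0 - x) * g z"
      by (rule MVT2) (use that dT in auto)
    then obtain z where "T 0 - T x = (0 - x) * g z" by blast
    then have "T x = x * g z" using T0 by simp
    moreover have "x * g z \<le> x * inverse M" using glow that by (simp add: mult_left_mono_neg)
    ultimately show ?thesis by (simp add: divide_inverse)
  qed
  have surjT: "surj T"
  proof -
    have "\<exists>x. T x = y" for y
    proof (cases "y > 0")
      case True
      have "T (M * y) \<ge> y" using Tpos[of "M*y"] True Mpos by simp
      then show ?thesis using IVT[of T 0 y "M*y"] T0 True Mpos cT by auto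
    next
      case False
      show ?thesis
      proof (cases "y = 0")
        case True then show ?thesis using T0 by blast
      next
        case False
        then have "y < 0" using \<open>\<not> y > 0\<close> by simp
        have "T (M * y) \<le> y" using Tneg[of "M*y"] \<open>y < 0\<close> Mpos by (simp add: mult_pos_neg)
        then show ?thesis using IVT[of T "M*y" y 0] T0 \<open>y < 0\<close> Mpos cT
          by (auto simp: mult_pos_neg less_imp_le)
      qed
    qed
    then show ?thesis by (metis surjI)
  qed
  have injT: "inj T" using smT strict_mono_imp_inj_on by blast
  have uniq: "T (\<psi> u) = u" if p0: "\<psi> 0 = 0" and pd: "\<forall>u. (\<psi> has_real_derivative F (\<psi> u)) (at u)" for \<psi> u
  proof -
    have "DERIV (\<lambda>u. T (\<psi> u) - u) v :> 0" for v
    proof -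
      have "DERIV (\<lambda>u. T (\<psi> u)) v :> g (\<psi> v) * F (\<psi> v)"
        using DERIV_chain2[OF dT pd[rule_format]] .
      moreover have "g (\<psi> v) * F (\<psi> v) = 1" unfolding g_def using pos[of "\<psi> v"] by simp
      ultimately have "DERIV (\<lambda>u. T (\<psi> u)) v :> 1" by simp
      from DERIV_diff[OF this DERIV_ident] show ?thesis by simp
    qed
    then have "T (\<psi> u) - u = T (\<psi> 0) - 0" using DERIV_isconst_all by blast
    then show ?thesis using p0 T0 by simp
  qed
  define \<phi> where "\<phi> = inv T"
  have Tphi: "T (\<phi> y) = y" for y unfolding \<phi>_def using surjT by (simp add: surj_f_inv_f)
  have phiT: "\<phi> (T x) = x" for x unfolding \<phi>_def using injT by simp
  have dphi: "(\<phi> has_real_derivative F (\<phi> y)) (at y)" for y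
  proof -
    have c: "isCont \<phi> y"
      using isCont_inverse_function[of 1 "\<phi> y" \<phi> T] phiT cT Tphi by auto
    have "DERIV \<phi> y :> inverse (g (\<phi> y))"
      by (rule DERIV_inverse_function[where f=T and g=\<phi> and a="y - 1" and b="y + 1"])
         (use dT gpos Tphi c in \<open>auto simp: less_imp_neq[symmetric]\<close>)
    then show ?thesis unfolding g_def by simp
  qed
  have phi0: "\<phi> 0 = 0" using phiT[of 0] T0 by simp
  have ex1: "\<exists>!\<psi>. \<psi> 0 = 0 \<and> (\<forall>u. (\<psi> has_real_derivative F (\<psi> u)) (at u))"
  proof (rule ex1I[of _ \<phi>])
    fix \<psi> assume h: "\<psi> 0 = 0 \<and> (\<forall>u. (\<psi> has_real_derivative F (\<psi> u)) (at u))"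
    show "\<psi> = \<phi>"
    proof
      fix u show "\<psi> u = \<phi> u" using uniq[of \<psi> u] h phiT by metis
    qed
  qed (use phi0 dphi in auto)
  show ?thesis using that T0 smT surjT ex1 uniq by blast
qed

lemma pointwise:
  fixes l1 l2 c \<theta> \<kappa> x :: real
  assumes l: "0 < l2" "l2 \<le> l1" and th: "0 < \<theta>" "\<theta> < pi/2"
    and k: "0 < \<kappa>" "\<kappa> \<le> cos \<theta>" and c: "0 < c" "3 * l1\<^sup>2 < c\<^sup>2 * \<kappa>"
  shows "c \<le> rhs l1 l2 c \<theta> x" "rhs l1 l2 c \<theta> x \<le> 2*c"
    "(c - rhs l1 l2 c \<theta> x) / Bfun l1 l2 x \<le> -\<kappa>/(3*c)"
    "l2\<^sup>2 \<le> Bfun l1 l2 x" "Bfun l1 l2 x \<le> l1\<^sup>2"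
proof -
  define B where "B = Bfun l1 l2 x"
  define co where "co = cos \<theta>"
  define si where "si = sin \<theta>"
  define F where "F = rhs l1 l2 c \<theta> x"
  have sc: "co\<^sup>2 + si\<^sup>2 = 1" "(cos x)\<^sup>2 + (sin x)\<^sup>2 = 1" unfolding co_def si_def by simp_all
  have ll: "l2\<^sup>2 \<le> l1\<^sup>2" using l by (simp add: power_mono)
  have B1: "B \<le> l1\<^sup>2"
  proof -
    have "B \<le> l1\<^sup>2 * (cos x)\<^sup>2 + l1\<^sup>2 * (sin x)\<^sup>2" unfolding B_def Bfun_def
      using ll by (simp add: mult_right_mono)
    also have "\<dots> = l1\<^sup>2" using sc(2) by (metis distrib_left mult.right_neutral)
    finally show ?thesis .
  qed
  have B2: "l2\<^sup>2 \<le> B"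
  proof -
    have "l2\<^sup>2 = l2\<^sup>2 * (cos x)\<^sup>2 + l2\<^sup>2 * (sin x)\<^sup>2" using sc(2) by (metis distrib_left mult.right_neutral)
    also have "\<dots> \<le> B" unfolding B_def Bfun_def
      using ll by (simp add: mult_right_mono)
    finally show ?thesis .
  qed
  have Bpos: "B > 0" using B2 l by (smt (verit) zero_less_power)
  have co1: "co \<le> 1" unfolding co_def by simp
  have si1: "si\<^sup>2 \<le> 1" using sc by (smt (verit) zero_le_power2)
  have kco: "\<kappa> \<le> co" using k co_def by simp
  have c2: "3 * l1\<^sup>2 < c\<^sup>2" using c k co1 kco
    by (smt (verit) mult_left_le mult_nonneg_nonneg zero_le_power2)
  define q where "q = si\<^sup>2 * B / c\<^sup>2"
  have q0: "0 \<le> q" unfolding q_def using Bpos by simp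
  have q1: "q \<le> l1\<^sup>2 / c\<^sup>2" unfolding q_def using c(1) B1 si1 Bpos
    by (simp add: divide_right_mono mult_le_one order_trans[OF mult_right_mono[OF si1]])
  have q2: "l1\<^sup>2 / c\<^sup>2 < \<kappa> / 3" using c by (simp add: field_simps)
  have q3: "q < \<kappa>/3" using q1 q2 by linarith
  define S where "S = c\<^sup>2 + 2 * co * B - q * B"
  have FS: "F = sqrt S" unfolding F_def S_def rhs_def q_def co_def si_def B_def Dfun_def
    by (simp add: power_divide power2_eq_square)
  have qB: "q * B \<le> co * B" using q3 kco Bpos k by (intro mult_right_mono) auto
  have coB: "0 \<le> co * B" using kco k Bpos by simp
  have S1: "c\<^sup>2 \<le> S" unfolding S_def using qB coB by linarith
  have S2: "S \<le> (2*c)\<^sup>2"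
  proof -
    have "co * B \<le> l1\<^sup>2" using co1 B1 Bpos kco k by (smt (verit) mult_left_le_one_le)
    moreover have "0 \<le> q * B" using q0 Bpos by simp
    moreover have "(2*c)\<^sup>2 = 4 * c\<^sup>2" by (simp add: power_mult_distrib)
    moreover have "2 * co * B = 2 * (co * B)" by simp
    ultimately show ?thesis unfolding S_def using c2 zero_le_power2[of l1] by linarith
  qed
  have F1: "c \<le> F" unfolding FS using S1 c(1) by (metis abs_of_pos real_sqrt_abs real_sqrt_le_mono)
  have F2: "F \<le> 2*c" unfolding FS using S2 c(1) by (metis abs_of_pos mult_pos_pos real_sqrt_abs real_sqrt_le_mono zero_less_numeral)
  have Fsq: "F\<^sup>2 = S" unfolding FS using S1 by (smt (verit) real_sqrt_pow2 zero_le_power2)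
  have eq: "(c - F) * (c + F) = B * (q - 2 * co)" using Fsq unfolding S_def by (simp add: algebra_simps power2_eq_square)
  have num: "q - 2 * co \<le> -\<kappa>" using q3 kco k by linarith
  have "(c - F) / B = (q - 2*co) / (c + F)" using eq Bpos F1 c(1)
    by (simp add: field_simps)
  also have "\<dots> \<le> -\<kappa> / (c + F)" using num F1 c(1) divide_right_mono[OF num, of "c + F"] by simp
  also have "\<dots> \<le> -\<kappa> / (3*c)" using F1 F2 c(1) k(1)
    by (simp add: frac_le)
  finally show "(c - rhs l1 l2 c \<theta> x) / Bfun l1 l2 x \<le> -\<kappa>/(3*c)" unfolding F_def B_def .
  show "c \<le> rhs l1 l2 c \<theta> x" "rhs l1 l2 c \<theta> x \<le> 2*c" using F1 F2 F_def by auto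
  show "l2\<^sup>2 \<le> Bfun l1 l2 x" "Bfun l1 l2 x \<le> l1\<^sup>2" using B1 B2 B_def by auto
qed

lemma H_neg:
  fixes l1 l2 c \<theta> \<kappa> :: real
  assumes l: "0 < l2" "l2 \<le> l1" and th: "0 < \<theta>" "\<theta> < pi/2"
    and k: "0 < \<kappa>" "\<kappa> \<le> cos \<theta>" and c: "0 < c" "3 * l1\<^sup>2 < c\<^sup>2 * \<kappa>"
  shows "Hfun l1 l2 c \<theta> < 0"
proof -
  define F where "F = rhs l1 l2 c \<theta>"
  define Bf where "Bf = Bfun l1 l2"
  define p where "p = phi l1 l2 c \<theta>"
  define D where "D = Dfun c \<theta>"
  note pw = pointwise[OF l th k c]
  have cB: "continuous_on UNIV Bf" unfolding Bf_def Bfun_def by (intro continuous_intros)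
  have cF: "continuous_on UNIV F" unfolding F_def rhs_def Bfun_def Dfun_def by (intro continuous_intros)
  have Fpos: "\<And>x. F x > 0" unfolding F_def using pw(1) c(1) by (meson less_le_trans)
  have Fb: "\<And>x. F x \<le> 2*c" unfolding F_def using pw(2) .
  obtain T where T0: "T 0 = 0" and smT: "strict_mono T" and surjT: "surj T"
    and ex1: "\<exists>!\<psi>. \<psi> 0 = 0 \<and> (\<forall>u. (\<psi> has_real_derivative F (\<psi> u)) (at u))"
    and Tinv: "\<And>\<psi> u. \<psi> 0 = 0 \<Longrightarrow> (\<forall>u. (\<psi> has_real_derivative F (\<psi> u)) (at u)) \<Longrightarrow> T (\<psi> u) = u"
    using ode_facts[OF cF Fpos Fb] by blast
  have Pp: "p 0 = 0 \<and> (\<forall>u. (p has_real_derivative F (p u)) (at u))"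
    unfolding p_def phi_def F_def[symmetric] using theI'[OF ex1] .
  have Tp: "\<And>u. T (p u) = u" using Tinv Pp by blast
  have injT: "inj T" using smT strict_mono_imp_inj_on by blast
  have pT: "p (T x) = x" for x using Tp[of "T x"] injT by (meson injD)
  have Tpi: "T pi > 0" using smT T0 pi_gt_zero by (metis strict_monoD)
  have U: "Ufun l1 l2 c \<theta> = T pi"
    unfolding Ufun_def p_def[symmetric]
  proof (rule the_equality)
    show "0 < T pi \<and> p (T pi) = pi" using Tpi pT by simp
    fix U assume "0 < U \<and> p U = pi"
    then show "U = T pi" using Tp[of U] by simp
  qed
  define U where "U = T pi"
  have cp: "continuous_on UNIV p" using Pp DERIV_isCont continuous_at_imp_continuous_on by blast
  have cBp: "continuous_on UNIV (\<lambda>s. Bf (p s))" by (rule continuous_on_compose2[OF cB cp]) auto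
  have cFp: "continuous_on UNIV (\<lambda>s. F (p s))" by (rule continuous_on_compose2[OF cF cp]) auto
  have Bpos: "\<And>x. Bf x > 0" unfolding Bf_def using pw(4) l(1) by (smt (verit) zero_less_power)
  have int1: "(\<lambda>s. D * Bf (p s)) integrable_on {0..U}"
    by (rule integrable_continuous_real) (auto intro!: continuous_intros continuous_on_subset[OF cBp])
  have int2: "(\<lambda>s. (c - F (p s)) / Bf (p s)) integrable_on {0..U}"
    by (rule integrable_continuous_real)
       (auto intro!: continuous_intros continuous_on_subset[OF cBp] continuous_on_subset[OF cFp] simp: Bpos less_imp_neq[symmetric])
  have Dpos: "D > 0" unfolding D_def Dfun_def using th c(1)
    by (simp add: sin_gt_zero)
  have D1: "D \<le> 1 / c" unfolding D_def Dfun_def using c(1) by (simp add: divide_right_mono)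
  have f1: "ffun l1 l2 c \<theta> U \<le> U * (D * l1\<^sup>2)"
  proof -
    have "ffun l1 l2 c \<theta> U = integral {0..U} (\<lambda>s. D * Bf (p s))"
      unfolding ffun_def D_def Bf_def p_def ..
    also have "\<dots> \<le> integral {0..U} (\<lambda>s. D * l1\<^sup>2)"
      by (rule integral_le[OF int1]) (use Dpos pw(5) Bf_def in \<open>auto intro: mult_left_mono\<close>)
    also have "\<dots> = U * (D * l1\<^sup>2)" using Tpi U_def by simp
    finally show ?thesis .
  qed
  have g1: "Gfun l1 l2 c \<theta> U \<le> U * (-\<kappa>/(3*c))"
  proof -
    have "Gfun l1 l2 c \<theta> U = integral {0..U} (\<lambda>s. (c - F (p s)) / Bf (p s))"
      unfolding Gfun_def F_def Bf_def p_def ..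
    also have "\<dots> \<le> integral {0..U} (\<lambda>s. -\<kappa>/(3*c))"
      by (rule integral_le[OF int2]) (use pw(3) F_def Bf_def in auto)
    also have "\<dots> = U * (-\<kappa>/(3*c))" using Tpi U_def by simp
    finally show ?thesis .
  qed
  have "Hfun l1 l2 c \<theta> = D * ffun l1 l2 c \<theta> U + c * Gfun l1 l2 c \<theta> U"
    unfolding Hfun_def U U_def D_def ..
  also have "\<dots> \<le> D * (U * (D * l1\<^sup>2)) + c * (U * (-\<kappa>/(3*c)))"
    using f1 g1 Dpos c(1) by (intro add_mono mult_left_mono) auto
  also have "\<dots> = U * (D\<^sup>2 * l1\<^sup>2 - \<kappa>/3)" using c(1) by (simp add: field_simps power2_eq_square)
  also have "\<dots> < 0"
  proof -
    have "D\<^sup>2 \<le> (1/c)\<^sup>2" using D1 Dpos by (simp add: power_mono)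
    then have "D\<^sup>2 * l1\<^sup>2 \<le> (1/c)\<^sup>2 * l1\<^sup>2" by (simp add: mult_right_mono)
    then have "D\<^sup>2 * l1\<^sup>2 \<le> l1\<^sup>2 / c\<^sup>2" by (simp add: power_divide)
    moreover have "l1\<^sup>2 / c\<^sup>2 < \<kappa> / 3" using c by (simp add: field_simps)
    ultimately have "D\<^sup>2 * l1\<^sup>2 - \<kappa>/3 < 0" by linarith
    then show ?thesis using Tpi U_def mult_pos_neg by blast
  qed
  finally show ?thesis .
qed

theorem lemma5p3:
  fixes l1 l2 :: real
  assumes lam: "(l1 > l2 \<and> l2 > 0) \<or> (l1 = 1 \<and> l2 = 1)"
  assumes uniq: "\<forall>c>0. \<exists>!\<theta>. 0 < \<theta> \<and> \<theta> < pi/2 \<and> \<theta> < theta_plus l1 c \<and> Hfun l1 l2 c \<theta> = 0"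
  shows "((\<lambda>c. THE \<theta>. 0 < \<theta> \<and> \<theta> < pi/2 \<and> \<theta> < theta_plus l1 c \<and> Hfun l1 l2 c \<theta> = 0)
           \<longlongrightarrow> pi/2) at_top"
proof -
  define th where "th = (\<lambda>c. THE \<theta>. 0 < \<theta> \<and> \<theta> < pi/2 \<and> \<theta> < theta_plus l1 c \<and> Hfun l1 l2 c \<theta> = 0)"
  have l: "0 < l2" "l2 \<le> l1" using lam by auto
  have thP: "0 < th c \<and> th c < pi/2 \<and> th c < theta_plus l1 c \<and> Hfun l1 l2 c (th c) = 0" if "c > 0" for c
    unfolding th_def using theI'[OF uniq[rule_format, OF that]] .
  have "\<forall>\<^sub>F c in at_top. dist (th c) (pi/2) < e" if e: "e > 0" for e
  proof -
    define \<epsilon> where "\<epsilon> = min e (pi/4)"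
    have ep: "0 < \<epsilon>" "\<epsilon> \<le> e" "\<epsilon> < pi" using e pi_gt_zero unfolding \<epsilon>_def by (auto simp: min_def)
    define \<kappa> where "\<kappa> = sin \<epsilon>"
    have kp: "\<kappa> > 0" unfolding \<kappa>_def using ep by (simp add: sin_gt_zero)
    define N where "N = 1 + 3 * l1\<^sup>2 / \<kappa>"
    show ?thesis unfolding eventually_at_top_linorder
    proof (intro exI allI impI)
      fix c assume cN: "c \<ge> N"
      have N1: "N \<ge> 1" unfolding N_def using kp by simp
      have c1: "c \<ge> 1" using cN N1 by linarith
      have "c \<le> c\<^sup>2" using c1 by (simp add: power2_eq_square)
      then have "3 * l1\<^sup>2 / \<kappa> < c\<^sup>2" using cN unfolding N_def by linarith
      then have cc: "3 * l1\<^sup>2 < c\<^sup>2 * \<kappa>" using kp by (simp add: field_simps)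
      have cpos: "c > 0" using c1 by simp
      note P = thP[OF cpos]
      have "th c > pi/2 - \<epsilon>"
      proof (rule ccontr)
        assume "\<not> th c > pi/2 - \<epsilon>"
        then have le: "th c \<le> pi/2 - \<epsilon>" by simp
        have "cos (pi/2 - \<epsilon>) \<le> cos (th c)"
          by (rule cos_monotone_0_pi_le) (use P le ep in auto)
        then have "\<kappa> \<le> cos (th c)" unfolding \<kappa>_def by (simp add: cos_diff)
        then have "Hfun l1 l2 c (th c) < 0"
          using H_neg[OF l, of "th c" \<kappa> c] P kp cpos cc by auto
        then show False using P by simp
      qed
      then show "dist (th c) (pi/2) < e" using P ep unfolding dist_real_def by auto
    qed
  qed
  then show ?thesis unfolding th_def[symmetric] by (rule tendstoI)
qed

end
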